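(* Let $a\in C^1(\mathbb R)$ be convex, let $\eta\in C^2(\mathbb R)$ and let $q$ satisfy $q'=\eta'a'$. For $u^+\ne u^-$ define $$c_\eta(u^+,u^-)=q(u^+)-q(u^-)-\frac{a(u^+)-a(u^-)}{u^+-u^-}\big(\eta(u^+)-\eta(u^-)\big).$$ Then for all $u^\pm\in\mathbb R$ with $u^+\neq u^-$, $$|c_\eta(u^+,u^-)|\le\frac12\Big(\sup_{[u^-,u^+]}|\eta''|\Big)\,\Delta(u^+,u^-).$$
   Context: $a''$ denotes the distributional second derivative of $a$ (a nonnegative measure). $[u^-,u^+]$ denotes the closed segment between $u^-$ and $u^+$ regardless of order. The regularity cost is $\Delta(u_1,u_2)=\frac12\int_{u_1}^{u_2}\int_{u_1}^{u_2}|a'(v)-a'(w)|\,dv\,dw=\int_{[u_1,u_2]}(u_2-s)(s-u_1)\,a''(ds)$. *)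

theory Defs
  imports "HOL-Analysis.Analysis"
begin

definition Delta :: "(real \<Rightarrow> real) \<Rightarrow> real \<Rightarrow> real \<Rightarrow> real" where
  "Delta a' u1 u2 = (1/2) * integral {min u1 u2..max u1 u2}
      (\<lambda>v. integral {min u1 u2..max u1 u2} (\<lambda>w. \<bar>a' v - a' w\<bar>))"

definition c_eta :: "(real \<Rightarrow> real) \<Rightarrow> (real \<Rightarrow> real) \<Rightarrow> (real \<Rightarrow> real) \<Rightarrow> real \<Rightarrow> real \<Rightarrow> real" where
  "c_eta a \<eta> q up um = q up - q um - (a up - a um) / (up - um) * (\<eta> up - \<eta> um)"

end

theory Submission
  imports Defs
begin

lemma ftc_real:
  fixes F f :: "real \<Rightarrow> real"
  assumes "L \<le> R" "\<And>x. x \<in> {L..R} \<Longrightarrow> (F has_real_derivative f x) (at x within {L..R})"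
  shows "(f has_integral (F R - F L)) {L..R}"
  using assms by (intro fundamental_theorem_of_calculus) (auto simp: has_real_derivative_iff_has_vector_derivative)

lemma deriv_mono:
  fixes a a' :: "real \<Rightarrow> real"
  assumes a_deriv: "\<And>x. (a has_real_derivative a' x) (at x)"
    and a_convex: "convex_on UNIV a" and "x \<le> y"
  shows "a' x \<le> a' y"
proof -
  have 1: "a y - a x \<ge> a' x * (y - x)"
    by (rule convex_on_imp_above_tangent[OF a_convex]) (auto simp: a_deriv)
  have 2: "a x - a y \<ge> a' y * (x - y)"
    by (rule convex_on_imp_above_tangent[OF a_convex]) (auto simp: a_deriv)
  show ?thesis
  proof (cases "x = y")
    case False
    with assms(3) have "x < y" by simp
    from 1 2 have "(a' y - a' x) * (y - x) \<ge> 0" by (simp add: algebra_simps)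
    with \<open>x < y\<close> show ?thesis by (simp add: zero_le_mult_iff)
  qed simp
qed

lemma main:
  fixes a a' \<eta> \<eta>' \<eta>'' q :: "real \<Rightarrow> real"
  assumes a_deriv: "\<And>x. (a has_real_derivative a' x) (at x)"
    and a'_cont: "continuous_on UNIV a'"
    and a_convex: "convex_on UNIV a"
    and eta_deriv: "\<And>x. (\<eta> has_real_derivative \<eta>' x) (at x)"
    and eta'_deriv: "\<And>x. (\<eta>' has_real_derivative \<eta>'' x) (at x)"
    and eta''_cont: "continuous_on UNIV \<eta>''"
    and q_deriv: "\<And>x. (q has_real_derivative \<eta>' x * a' x) (at x)"
    and LR: "L < R"
    and Mb: "\<And>x. x \<in> {L..R} \<Longrightarrow> \<bar>\<eta>'' x\<bar> \<le> M"
  shows "\<bar>c_eta a \<eta> q R L\<bar> \<le> M * ((a L + a R) * (R - L) / 2 - integral {L..R} a)"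
    and "Delta a' R L = 2 * ((a L + a R) * (R - L) / 2 - integral {L..R} a)"
proof -
  define h where "h = R - L"
  define s where "s = (a R - a L) / h"
  define A where "A = integral {L..R} a"
  define K where "K = (a L + a R) * h / 2 - A"
  define Ai where "Ai = (\<lambda>x. integral {L..x} a)"
  define B where "B = (\<lambda>x. a x - a L - s * (x - L))"
  have hpos: "h > 0" using LR by (simp add: h_def)
  have aD: "\<And>x S. (a has_real_derivative a' x) (at x within S)"
    using a_deriv has_field_derivative_at_within by blast
  have etaD: "\<And>x S. (\<eta> has_real_derivative \<eta>' x) (at x within S)"
    using eta_deriv has_field_derivative_at_within by blast
  have eta'D: "\<And>x S. (\<eta>' has_real_derivative \<eta>'' x) (at x within S)"
    using eta'_deriv has_field_derivative_at_within by blast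
  have qD: "\<And>x S. (q has_real_derivative \<eta>' x * a' x) (at x within S)"
    using q_deriv has_field_derivative_at_within by blast
  have a_cont: "continuous_on {L..R} a"
    by (meson DERIV_isCont a_deriv continuous_at_imp_continuous_on)
  have AiD: "\<And>x. x \<in> {L..R} \<Longrightarrow> (Ai has_real_derivative a x) (at x within {L..R})"
    unfolding Ai_def has_real_derivative_iff_has_vector_derivative
    by (rule integral_has_vector_derivative[OF a_cont])
  have AiL: "Ai L = 0" by (simp add: Ai_def)
  have AiR: "Ai R = A" by (simp add: Ai_def A_def)
  have BL: "B L = 0" and BR: "B R = 0" using hpos by (auto simp: B_def s_def h_def field_simps)
  have Bneg: "B x \<le> 0" if "x \<in> {L..R}" for x
  proof -
    have "convex_on {L..R} a" using a_convex convex_on_subset by blast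
    from convex_onD_Icc'[OF this that] show ?thesis by (simp add: B_def s_def h_def algebra_simps)
  qed
  define F where "F = (\<lambda>x. q x - s * \<eta> x - \<eta>' x * B x)"
  have FD: "(F has_real_derivative (- \<eta>'' x * B x)) (at x within {L..R})" for x
  proof -
    have "(F has_real_derivative (\<eta>' x * a' x - s * \<eta>' x - (\<eta>'' x * B x + \<eta>' x * (a' x - s * 1))))
        (at x within {L..R})"
      unfolding F_def B_def
      by (auto intro!: derivative_eq_intros qD etaD eta'D aD)
    then show ?thesis by (simp add: algebra_simps)
  qed
  have cint: "((\<lambda>x. - \<eta>'' x * B x) has_integral c_eta a \<eta> q R L) {L..R}"
  proof -
    have "((\<lambda>x. - \<eta>'' x * B x) has_integral F R - F L) {L..R}"
      using LR FD by (intro ftc_real) auto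
    moreover have "F R - F L = q R - q L - s * (\<eta> R - \<eta> L)"
      using BL BR by (simp add: F_def algebra_simps)
    moreover have "q R - q L - s * (\<eta> R - \<eta> L) = c_eta a \<eta> q R L"
      by (simp add: c_eta_def s_def h_def)
    ultimately show ?thesis by metis
  qed
  define P where "P = (\<lambda>x. s * (x - L)^2 / 2 + a L * x - Ai x)"
  have PD: "(P has_real_derivative - B x) (at x within {L..R})" if "x \<in> {L..R}" for x
  proof -
    show ?thesis
      unfolding P_def B_def
      by (auto intro!: derivative_eq_intros AiD that simp: field_simps)
  qed
  have Bint: "((\<lambda>x. - B x) has_integral K) {L..R}"
  proof -
    have "((\<lambda>x. - B x) has_integral P R - P L) {L..R}"
      using LR PD by (intro ftc_real) auto
    moreover have "P R - P L = K"
    proof -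
      have sh: "s * h = a R - a L" using hpos by (simp add: s_def)
      have "P R - P L = (s * h) * h / 2 + a L * h - A"
        by (simp add: P_def AiL AiR h_def power2_eq_square algebra_simps)
      also have "\<dots> = K" unfolding sh by (simp add: K_def field_simps)
      finally show ?thesis .
    qed
    ultimately show ?thesis by simp
  qed
  have MB: "((\<lambda>x. M * - B x) has_integral M * K) {L..R}"
    using has_integral_mult_right[OF Bint] by simp
  have MB': "((\<lambda>x. - (M * - B x)) has_integral - (M * K)) {L..R}"
    using has_integral_neg[OF MB] by simp
  have pw: "\<bar>- \<eta>'' x * B x\<bar> \<le> M * - B x" if "x \<in> {L..R}" for x
  proof -
    have "\<bar>- \<eta>'' x * B x\<bar> = \<bar>\<eta>'' x\<bar> * (- B x)" using Bneg[OF that] by (simp add: abs_mult)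
    also have "\<dots> \<le> M * - B x" using Mb[OF that] Bneg[OF that] by (intro mult_right_mono) auto
    finally show ?thesis .
  qed
  have up: "c_eta a \<eta> q R L \<le> M * K"
  proof (rule has_integral_le[OF cint MB])
    fix x assume "x \<in> {L..R}"
    from pw[OF this] show "- \<eta>'' x * B x \<le> M * - B x" by (simp add: abs_le_iff)
  qed
  have lo: "- (M * K) \<le> c_eta a \<eta> q R L"
  proof (rule has_integral_le[OF MB' cint])
    fix x assume "x \<in> {L..R}"
    from pw[OF this] show "- (M * - B x) \<le> - \<eta>'' x * B x" by (simp add: abs_le_iff)
  qed
  show "\<bar>c_eta a \<eta> q R L\<bar> \<le> M * ((a L + a R) * (R - L) / 2 - integral {L..R} a)"
    using up lo by (simp add: K_def A_def h_def abs_le_iff)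
  have inner: "((\<lambda>w. \<bar>a' v - a' w\<bar>) has_integral (a' v * (2 * v - L - R) + a L + a R - 2 * a v)) {L..R}"
    if v: "v \<in> {L..R}" for v
  proof -
    have i1: "((\<lambda>w. \<bar>a' v - a' w\<bar>) has_integral ((a' v * v - a v) - (a' v * L - a L))) {L..v}"
    proof (rule has_integral_eq)
      show "((\<lambda>w. a' v - a' w) has_integral ((a' v * v - a v) - (a' v * L - a L))) {L..v}"
      proof (rule ftc_real)
        fix x assume "x \<in> {L..v}"
        have "((\<lambda>w. a' v * w - a w) has_real_derivative (a' v * 1 - a' x)) (at x within {L..v})"
          by (auto intro!: derivative_eq_intros aD)
        then show "((\<lambda>w. a' v * w - a w) has_real_derivative (a' v - a' x)) (at x within {L..v})" by simp
      qed (use v in auto)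
      show "a' v - a' x = \<bar>a' v - a' x\<bar>" if "x \<in> {L..v}" for x
        using deriv_mono[OF a_deriv a_convex, of x v] that by auto
    qed
    have i2: "((\<lambda>w. \<bar>a' v - a' w\<bar>) has_integral ((a R - a' v * R) - (a v - a' v * v))) {v..R}"
    proof (rule has_integral_eq)
      show "((\<lambda>w. a' w - a' v) has_integral ((a R - a' v * R) - (a v - a' v * v))) {v..R}"
      proof (rule ftc_real)
        fix x assume "x \<in> {v..R}"
        have "((\<lambda>w. a w - a' v * w) has_real_derivative (a' x - a' v * 1)) (at x within {v..R})"
          by (auto intro!: derivative_eq_intros aD)
        then show "((\<lambda>w. a w - a' v * w) has_real_derivative (a' x - a' v)) (at x within {v..R})" by simp
      qed (use v in auto)
      show "a' x - a' v = \<bar>a' v - a' x\<bar>" if "x \<in> {v..R}" for x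
        using deriv_mono[OF a_deriv a_convex, of v x] that by auto
    qed
    have "((\<lambda>w. \<bar>a' v - a' w\<bar>) has_integral ((a' v * v - a v) - (a' v * L - a L)) + ((a R - a' v * R) - (a v - a' v * v))) {L..R}"
      using v by (intro has_integral_combine[OF _ _ i1 i2]) auto
    then show ?thesis by (simp add: algebra_simps)
  qed
  define G where "G = (\<lambda>v. a v * (2 * v - L - R) - 4 * Ai v + (a L + a R) * v)"
  have GD: "(G has_real_derivative (a' v * (2 * v - L - R) + a L + a R - 2 * a v)) (at v within {L..R})"
    if "v \<in> {L..R}" for v
  proof -
    have "(G has_real_derivative (a' v * (2 * v - L - R) + a v * (2 * 1 - 0 - 0) - 4 * a v + (a L + a R) * 1)) (at v within {L..R})"
      unfolding G_def by (auto intro!: derivative_eq_intros aD AiD that)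
    then show ?thesis by (simp add: algebra_simps)
  qed
  have outer: "((\<lambda>v. integral {L..R} (\<lambda>w. \<bar>a' v - a' w\<bar>)) has_integral 4 * K) {L..R}"
  proof (rule has_integral_eq)
    show "((\<lambda>v. a' v * (2 * v - L - R) + a L + a R - 2 * a v) has_integral 4 * K) {L..R}"
    proof -
      have "((\<lambda>v. a' v * (2 * v - L - R) + a L + a R - 2 * a v) has_integral G R - G L) {L..R}"
        using LR GD by (intro ftc_real) auto
      moreover have "G R - G L = 4 * K"
        by (simp add: G_def K_def AiL AiR h_def algebra_simps)
      ultimately show ?thesis by simp
    qed
    show "a' x * (2 * x - L - R) + a L + a R - 2 * a x = integral {L..R} (\<lambda>w. \<bar>a' x - a' w\<bar>)"
      if "x \<in> {L..R}" for x using integral_unique[OF inner[OF that]] by simp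
  qed
  show "Delta a' R L = 2 * ((a L + a R) * (R - L) / 2 - integral {L..R} a)"
    using integral_unique[OF outer] LR
    by (simp add: Delta_def K_def A_def h_def min_def max_def)
qed

theorem lemma2p1:
  fixes a a' \<eta> \<eta>' \<eta>'' q :: "real \<Rightarrow> real"
  assumes a_deriv: "\<And>x. (a has_real_derivative a' x) (at x)"
    and a'_cont: "continuous_on UNIV a'"
    and a_convex: "convex_on UNIV a"
    and eta_deriv: "\<And>x. (\<eta> has_real_derivative \<eta>' x) (at x)"
    and eta'_deriv: "\<And>x. (\<eta>' has_real_derivative \<eta>'' x) (at x)"
    and eta''_cont: "continuous_on UNIV \<eta>''"
    and q_deriv: "\<And>x. (q has_real_derivative \<eta>' x * a' x) (at x)"
    and neq: "up \<noteq> um"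
  shows "\<bar>c_eta a \<eta> q up um\<bar>
           \<le> (1/2) * (SUP x\<in>{min um up..max um up}. \<bar>\<eta>'' x\<bar>) * Delta a' up um"
proof -
  define L where "L = min um up"
  define R where "R = max um up"
  define M where "M = (SUP x\<in>{L..R}. \<bar>\<eta>'' x\<bar>)"
  have LR: "L < R" using neq by (auto simp: L_def R_def)
  have bdd: "bdd_above ((\<lambda>x. \<bar>\<eta>'' x\<bar>) ` {L..R})"
  proof -
    have "continuous_on {L..R} (\<lambda>x. \<bar>\<eta>'' x\<bar>)"
      using eta''_cont by (intro continuous_intros) (auto intro: continuous_on_subset)
    then have "compact ((\<lambda>x. \<bar>\<eta>'' x\<bar>) ` {L..R})" by (intro compact_continuous_image) auto
    then show ?thesis by (intro bounded_imp_bdd_above compact_imp_bounded)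
  qed
  have Mb: "\<And>x. x \<in> {L..R} \<Longrightarrow> \<bar>\<eta>'' x\<bar> \<le> M"
    unfolding M_def by (rule cSUP_upper[OF _ bdd])
  note m = main[OF a_deriv a'_cont a_convex eta_deriv eta'_deriv eta''_cont q_deriv LR Mb]
  have c1: "\<bar>c_eta a \<eta> q up um\<bar> = \<bar>c_eta a \<eta> q R L\<bar>"
    using neq by (cases "um < up") (auto simp: L_def R_def c_eta_def field_simps)
  have d1: "Delta a' up um = Delta a' R L"
    using neq by (cases "um < up") (auto simp: L_def R_def Delta_def min_def max_def)
  have e: "(1/2) * M * Delta a' R L = M * ((a L + a R) * (R - L) / 2 - integral {L..R} a)"
  proof -
    have e0: "\<And>X::real. 1/2 * M * (2 * X) = M * X" by simp
    show ?thesis by (subst m(2)) (simp_all only: e0)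
  qed
  have "\<bar>c_eta a \<eta> q R L\<bar> \<le> (1/2) * M * Delta a' R L"
    unfolding e by (rule m(1))
  then show ?thesis
    unfolding c1 d1 by (simp add: M_def L_def R_def)
qed

end
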